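(* For every $p\in\Delta(\Omega)\setminus I$, there is a splitting $\mu\in\mathcal{S}(p)$ supported on at most two points that attains the maximum in $V_\delta(p)=\max_{\mu\in\mathcal{S}(p)}\{(1-\delta)\mu(\{q\in I\})+\delta\,\mathbb{E}_\mu[V_\delta(\phi(q))]\}$.
   Context: Let $\Omega$ be a finite set, identify each $\omega$ with a unit vector of $\mathbb{R}^\Omega$ and $\Delta(\Omega)$ with the unit simplex. Let $M$ be the transition matrix of an irreducible Markov chain on $\Omega$, $r:\Omega\to\mathbb{R}$, $\delta\in[0,1)$. Let $I=\{p\in\Delta(\Omega):\sum_\omega p(\omega)r(\omega)\ge0\}$ and $\phi(q)=qM$. $\mathcal{S}(p)$ is the set of Borel probability measures on $\Delta(\Omega)$ with mean $p$. $V_\delta$ is the value of the advisor's problem: at each stage, at belief $p_n$, choose $\mu\in\mathcal{S}(p_n)$, draw a posterior $q_n\sim\mu$, receive $\mathbf{1}_{\{q_n\in I\}}$, and move to $p_{n+1}=\phi(q_n)$, with payoff $\mathbb{E}[(1-\delta)\sum_n\delta^{n-1}\mathbf{1}_{\{q_n\in I\}}]$; $V_\delta$ is the unique solution of the dynamic programming equation in the claim. *)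

theory Defs
  imports "HOL-Analysis.Analysis" "HOL-Probability.Probability"
begin

definition belief_simplex :: "(real^'n::finite) set" where
  "belief_simplex = {p. (\<forall>i. 0 \<le> p $ i) \<and> (\<Sum>i\<in>UNIV. p $ i) = 1}"

definition stochastic_matrix :: "real^'n::finite^'n \<Rightarrow> bool" where
  "stochastic_matrix M \<longleftrightarrow> (\<forall>i j. 0 \<le> M $ i $ j) \<and> (\<forall>i. (\<Sum>j\<in>UNIV. M $ i $ j) = 1)"

definition irreducible_chain :: "real^'n::finite^'n \<Rightarrow> bool" where
  "irreducible_chain M \<longleftrightarrow> (\<forall>i j. (i, j) \<in> {(a, b). 0 < M $ a $ b}\<^sup>+)"

definition region_I :: "('n::finite \<Rightarrow> real) \<Rightarrow> (real^'n) set" where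
  "region_I r = {p \<in> belief_simplex. 0 \<le> (\<Sum>w\<in>UNIV. p $ w * r w)}"

definition phi :: "real^'n::finite^'n \<Rightarrow> real^'n \<Rightarrow> real^'n" where
  "phi M q = q v* M"

definition splittings :: "(real^'n::finite) \<Rightarrow> (real^'n) measure set" where
  "splittings p = {\<mu>. sets \<mu> = sets borel \<and> prob_space \<mu> \<and> emeasure \<mu> belief_simplex = 1
                      \<and> has_bochner_integral \<mu> (\<lambda>q. q) p}"

definition dp_objective ::
  "real^'n::finite^'n \<Rightarrow> ('n \<Rightarrow> real) \<Rightarrow> real \<Rightarrow> (real^'n \<Rightarrow> real) \<Rightarrow> (real^'n) measure \<Rightarrow> real" where
  "dp_objective M r \<delta> V \<mu> =
     (1 - \<delta>) * measure \<mu> (region_I r) + \<delta> * (\<integral>q. V (phi M q) \<partial>\<mu>)"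

definition solves_dp ::
  "real^'n::finite^'n \<Rightarrow> ('n \<Rightarrow> real) \<Rightarrow> real \<Rightarrow> (real^'n \<Rightarrow> real) \<Rightarrow> bool" where
  "solves_dp M r \<delta> V \<longleftrightarrow>
     V \<in> borel_measurable borel \<and> bounded (V ` belief_simplex) \<and>
     (\<forall>p\<in>belief_simplex. (\<exists>\<mu>\<in>splittings p. dp_objective M r \<delta> V \<mu> = V p) \<and>
                   (\<forall>\<mu>\<in>splittings p. dp_objective M r \<delta> V \<mu> \<le> V p))"

end

theory Submission
  imports Defs
begin


definition dmeas :: "'b set \<Rightarrow> ('b \<Rightarrow> real) \<Rightarrow> ('b \<Rightarrow> 'a::euclidean_space) \<Rightarrow> 'a measure" where
  "dmeas S u \<pi> = distr (measure_pmf (embed_pmf (\<lambda>z. if z \<in> S then u z else 0))) borel \<pi>"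

context
  fixes S :: "'b set" and u :: "'b \<Rightarrow> real"
  assumes fin: "finite S" and nn: "\<And>z. z \<in> S \<Longrightarrow> 0 \<le> u z" and s1: "sum u S = 1"
begin

definition "P = embed_pmf (\<lambda>z. if z \<in> S then u z else 0)"

lemma pmfP: "pmf P z = (if z \<in> S then u z else 0)"
  unfolding P_def
proof (rule pmf_embed_pmf)
  show "\<And>x. 0 \<le> (if x \<in> S then u x else 0)" using nn by auto
  have "(\<integral>\<^sup>+x. ennreal (if x \<in> S then u x else 0) \<partial>count_space UNIV) = (\<integral>\<^sup>+x. ennreal (u x) * indicator S x \<partial>count_space UNIV)"
    by (intro nn_integral_cong) (auto simp: indicator_def)
  also have "\<dots> = (\<Sum>x\<in>S. ennreal (u x))"
    by (subst nn_integral_indicator_finite) (auto simp: fin)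
  also have "\<dots> = 1" using s1 nn by (simp add: sum_ennreal)
  finally show "(\<integral>\<^sup>+x. ennreal (if x \<in> S then u x else 0) \<partial>count_space UNIV) = 1" .
qed

lemma setP: "set_pmf P \<subseteq> S"
  by (auto simp: set_pmf_eq pmfP split: if_splits)

lemma dmeas_eq: "dmeas S u \<pi> = distr (measure_pmf P) borel \<pi>"
  by (simp add: dmeas_def P_def)

lemma dmeas_sets: "sets (dmeas S u \<pi>) = sets borel"
  by (simp add: dmeas_eq)

lemma dmeas_prob: "prob_space (dmeas S u \<pi>)"
  unfolding dmeas_eq by (rule prob_space.prob_space_distr) (auto simp: measure_pmf.prob_space_axioms)

lemma dmeas_integral:
  fixes h :: "'a::euclidean_space \<Rightarrow> 'c::{banach, second_countable_topology}"
  assumes "h \<in> borel_measurable borel"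
  shows "integral\<^sup>L (dmeas S u \<pi>) h = (\<Sum>z\<in>S. u z *\<^sub>R h (\<pi> z))"
proof -
  have "integral\<^sup>L (dmeas S u \<pi>) h = integral\<^sup>L (measure_pmf P) (\<lambda>z. h (\<pi> z))"
    unfolding dmeas_eq by (rule integral_distr) (auto simp: assms)
  also have "\<dots> = (\<Sum>z\<in>S. pmf P z *\<^sub>R h (\<pi> z))"
    by (rule integral_measure_pmf[OF fin]) (use setP in auto)
  finally show ?thesis by (simp add: pmfP)
qed

lemma dmeas_integrable:
  fixes h :: "'a::euclidean_space \<Rightarrow> 'c::{banach, second_countable_topology}"
  assumes "h \<in> borel_measurable borel"
  shows "integrable (dmeas S u \<pi>) h"
proof -
  have "integrable (measure_pmf P) (\<lambda>z. h (\<pi> z))"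
    by (rule integrable_measure_pmf_finite) (use setP fin finite_subset in blast)
  then show ?thesis unfolding dmeas_eq by (subst integrable_distr_eq) (auto simp: assms)
qed

lemma dmeas_emeasure:
  assumes "A \<in> sets borel"
  shows "emeasure (dmeas S u \<pi>) A = ennreal (\<Sum>z\<in>{z\<in>S. \<pi> z \<in> A}. u z)"
proof -
  have "emeasure (dmeas S u \<pi>) A = emeasure (measure_pmf P) (\<pi> -` A)"
    unfolding dmeas_eq by (subst emeasure_distr) (auto simp: assms)
  also have "\<dots> = emeasure (measure_pmf P) {z\<in>S. \<pi> z \<in> A}"
  proof -
    have "\<pi> -` A \<inter> set_pmf P = {z\<in>S. \<pi> z \<in> A} \<inter> set_pmf P" using setP by blast
    then show ?thesis by (metis emeasure_Int_set_pmf)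
  qed
  also have "\<dots> = ennreal (measure (measure_pmf P) {z\<in>S. \<pi> z \<in> A})"
    by (simp add: measure_pmf.emeasure_eq_measure)
  also have "\<dots> = ennreal (\<Sum>z\<in>{z\<in>S. \<pi> z \<in> A}. u z)"
    by (subst measure_measure_pmf_finite) (auto simp: fin pmfP)
  finally show ?thesis .
qed

lemma dmeas_mean: "has_bochner_integral (dmeas S u \<pi>) (\<lambda>x. x) (\<Sum>z\<in>S. u z *\<^sub>R \<pi> z)"
proof -
  have i: "integrable (dmeas S u \<pi>) (\<lambda>x. x)" by (rule dmeas_integrable) simp
  have e: "integral\<^sup>L (dmeas S u \<pi>) (\<lambda>x. x) = (\<Sum>z\<in>S. u z *\<^sub>R \<pi> z)" by (rule dmeas_integral) simp
  show ?thesis using has_bochner_integral_integrable[OF i] unfolding e .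
qed

end

lemma barycenter_in_convex:
  fixes \<rho> :: "'a::euclidean_space measure"
  assumes sets: "sets \<rho> = sets borel" and ps: "prob_space \<rho>"
    and "S \<in> sets borel" "emeasure \<rho> S = 1" and hb: "has_bochner_integral \<rho> (\<lambda>x. x) m"
    and "S \<subseteq> K" "convex K"
  shows "m \<in> K"
  using assms(3-4,6-7)
proof (induction "nat (aff_dim K + 1)" arbitrary: K S rule: less_induct)
  case less
  interpret prob_space \<rho> by (fact ps)
  have Sev: "S \<in> sets \<rho>" using less.prems sets by simp
  have AE: "AE x in \<rho>. x \<in> S"
    using AE_in_set_eq_1[OF Sev] less.prems(2) by (simp add: emeasure_eq_measure)
  have Sne: "S \<noteq> {}" using less.prems(2) by auto
  have int_inner: "has_bochner_integral \<rho> (\<lambda>x. a \<bullet> x) (a \<bullet> m)" for a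
    using has_bochner_integral_inner_right[of a \<rho> "\<lambda>x. x" m] hb by simp
  show "m \<in> K"
  proof (rule ccontr)
    assume mK: "m \<notin> K"
    show False
    proof (cases "m \<in> closure K")
      case False
      then obtain a b where ab: "a \<bullet> m < b" "\<forall>x\<in>closure K. a \<bullet> x > b"
        using separating_hyperplane_closed_point[of "closure K" m] less.prems(4)
        by (auto simp: convex_closure)
      have "integral\<^sup>L \<rho> (\<lambda>x. b) \<le> integral\<^sup>L \<rho> (\<lambda>x. a \<bullet> x)"
      proof (rule integral_mono_AE)
        show "integrable \<rho> (\<lambda>x. b)" by simp
        show "integrable \<rho> (\<lambda>x. a \<bullet> x)" by (rule integrable.intros[OF int_inner])
        show "AE x in \<rho>. b \<le> a \<bullet> x"
          using AE by eventually_elim (use ab less.prems(3) closure_subset in \<open>fastforce\<close>)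
      qed
      moreover have "integral\<^sup>L \<rho> (\<lambda>x. a \<bullet> x) = a \<bullet> m"
        using int_inner by (simp add: has_bochner_integral_integral_eq)
      ultimately show False using ab by (simp add: prob_space)
    next
      case True
      have "m \<notin> rel_interior K" using mK rel_interior_subset by blast
      then obtain a where a: "a \<noteq> 0" "\<And>y. y \<in> closure K \<Longrightarrow> a \<bullet> m \<le> a \<bullet> y"
        "\<And>y. y \<in> rel_interior K \<Longrightarrow> a \<bullet> m < a \<bullet> y"
        using supporting_hyperplane_relative_frontier[OF less.prems(4) True] by metis
      define S' where "S' = S \<inter> {x. a \<bullet> x = a \<bullet> m}"
      define K' where "K' = K \<inter> {x. a \<bullet> x = a \<bullet> m}"
      have nonneg: "AE x in \<rho>. 0 \<le> a \<bullet> x - a \<bullet> m"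
        using AE by eventually_elim (use a(2) less.prems(3) closure_subset in \<open>fastforce\<close>)
      have c: "has_bochner_integral \<rho> (\<lambda>x. a \<bullet> m) (a \<bullet> m)"
        using has_bochner_integral_integrable[of \<rho> "\<lambda>x. a \<bullet> m"] by (simp add: prob_space)
      have hb2: "has_bochner_integral \<rho> (\<lambda>x. a \<bullet> x - a \<bullet> m) 0"
        using has_bochner_integral_diff[OF int_inner[of a] c] by simp
      then have "AE x in \<rho>. a \<bullet> x - a \<bullet> m = 0"
        using integral_nonneg_eq_0_iff_AE[OF _ nonneg] by (auto simp: has_bochner_integral_iff)
      then have AE': "AE x in \<rho>. x \<in> S'"
        using AE by eventually_elim (auto simp: S'_def)
      have S'b: "S' \<in> sets borel"
        unfolding S'_def using less.prems(1) by (intro sets.Int) (auto intro!: borel_closed closed_hyperplane)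
      have S'1: "emeasure \<rho> S' = 1"
        using AE' AE_in_set_eq_1[of S'] S'b sets by (simp add: emeasure_eq_measure)
      have face: "K' face_of K"
        unfolding K'_def
        by (rule face_of_Int_supporting_hyperplane_ge) (use less.prems(4) a(2) closure_subset in auto)
      have Kne: "K \<noteq> {}" using Sne less.prems(3) by auto
      then obtain y where y: "y \<in> rel_interior K"
        using rel_interior_eq_empty[OF less.prems(4)] by blast
      then have "y \<notin> K'" using a(3)[OF y] by (auto simp: K'_def)
      moreover have "y \<in> K" using y rel_interior_subset by blast
      ultimately have "K' \<noteq> K" by blast
      then have "aff_dim K' < aff_dim K"
        by (rule face_of_aff_dim_lt[OF less.prems(4) face])
      then have lt: "nat (aff_dim K' + 1) < nat (aff_dim K + 1)"
        using aff_dim_geq[of K'] by linarith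
      have "m \<in> K'"
        by (rule less.hyps[OF lt S'b S'1]) (use less.prems(3) face_of_imp_convex[OF face] in \<open>auto simp: S'_def K'_def\<close>)
      then show False using mK by (simp add: K'_def)
    qed
  qed
qed


lemma simplex_closed: "closed (belief_simplex :: (real^'n::finite) set)"
proof -
  have "belief_simplex = (\<Inter>i. {p::real^'n. 0 \<le> p $ i}) \<inter> {p. (\<Sum>i\<in>UNIV. p $ i) = 1}"
    by (auto simp: belief_simplex_def)
  also have "closed \<dots>"
    by (intro closed_Int closed_INT ballI closed_Collect_le closed_Collect_eq continuous_intros)
  finally show ?thesis .
qed

lemma simplex_borel[measurable]: "(belief_simplex :: (real^'n::finite) set) \<in> sets borel"
  using simplex_closed by (rule borel_closed)

lemma simplex_convex: "convex (belief_simplex :: (real^'n::finite) set)"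
  unfolding convex_def belief_simplex_def
  by (auto simp: sum.distrib sum_distrib_left[symmetric])

lemma regionI_closed: "closed (region_I r :: (real^'n::finite) set)"
proof -
  have "region_I r = belief_simplex \<inter> {p::real^'n. 0 \<le> (\<Sum>w\<in>UNIV. p $ w * r w)}"
    by (auto simp: region_I_def)
  also have "closed \<dots>"
    by (intro closed_Int simplex_closed closed_Collect_le continuous_intros)
  finally show ?thesis .
qed

lemma regionI_borel[measurable]: "(region_I r :: (real^'n::finite) set) \<in> sets borel"
  using regionI_closed by (rule borel_closed)

lemma regionI_convex: "convex (region_I r :: (real^'n::finite) set)"
proof -
  have "region_I r = belief_simplex \<inter> {p::real^'n. 0 \<le> (\<Sum>w\<in>UNIV. p $ w * r w)}"
    by (auto simp: region_I_def)
  moreover have "convex {p::real^'n. 0 \<le> (\<Sum>w\<in>UNIV. p $ w * r w)}"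
    unfolding convex_def
    by (auto simp: sum.distrib distrib_right sum_distrib_left[symmetric] mult.assoc intro!: add_nonneg_nonneg)
  ultimately show ?thesis using simplex_convex convex_Int by metis
qed

lemma regionI_sub: "region_I r \<subseteq> belief_simplex"
  by (auto simp: region_I_def)

lemma phi_eq: "phi M = (\<lambda>x. transpose M *v x)"
  by (auto simp: phi_def)

lemma phi_bl: "bounded_linear (phi M)"
  unfolding phi_eq by simp

lemma phi_linear: "linear (phi M)"
  using phi_bl bounded_linear.linear by blast

lemma phi_cont: "continuous_on UNIV (phi M)"
  using phi_bl linear_continuous_on by blast

lemma phi_meas[measurable]: "phi M \<in> borel_measurable borel"
  using phi_cont borel_measurable_continuous_onI by blast

lemma phi_sum: "phi M (\<Sum>i\<in>A. c i *\<^sub>R x i) = (\<Sum>i\<in>A. c i *\<^sub>R phi M (x i))"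
  by (simp add: linear_sum[OF phi_linear] linear_scale[OF phi_linear])

lemma phi_simplex:
  assumes "stochastic_matrix M" "q \<in> belief_simplex"
  shows "phi M q \<in> belief_simplex"
proof -
  have comp: "phi M q $ j = (\<Sum>i\<in>UNIV. q $ i * M $ i $ j)" for j
    by (simp add: phi_def vector_matrix_mult_def)
  have "0 \<le> phi M q $ j" for j
    unfolding comp using assms by (auto simp: stochastic_matrix_def belief_simplex_def intro!: sum_nonneg)
  moreover have "(\<Sum>j\<in>UNIV. phi M q $ j) = 1"
  proof -
    have "(\<Sum>j\<in>UNIV. phi M q $ j) = (\<Sum>i\<in>UNIV. q $ i * (\<Sum>j\<in>UNIV. M $ i $ j))"
      unfolding comp by (subst sum.swap) (simp add: sum_distrib_left)
    also have "\<dots> = 1" using assms by (simp add: stochastic_matrix_def belief_simplex_def)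
    finally show ?thesis .
  qed
  ultimately show ?thesis by (simp add: belief_simplex_def)
qed


context
  fixes M :: "real^'n::finite^'n" and r :: "'n \<Rightarrow> real" and \<delta> :: real and V :: "real^'n \<Rightarrow> real"
  assumes stoch: "stochastic_matrix M" and d0: "0 \<le> \<delta>" and d1: "\<delta> < 1" and dp: "solves_dp M r \<delta> V"
begin

definition "F q = (1 - \<delta>) * indicator (region_I r) q + \<delta> * V (phi M q)"

lemma V_meas[measurable]: "V \<in> borel_measurable borel"
  using dp by (simp add: solves_dp_def)

lemma F_meas[measurable]: "F \<in> borel_measurable borel"
  unfolding F_def by measurable

lemma V_bound: obtains B where "0 \<le> B" "\<And>q. q \<in> belief_simplex \<Longrightarrow> \<bar>V q\<bar> \<le> B"
proof -
  have "bounded (V ` belief_simplex)" using dp by (simp add: solves_dp_def)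
  then obtain a where "\<forall>x\<in>V ` belief_simplex. norm x \<le> a" by (auto simp: bounded_iff)
  then show ?thesis by (intro that[of "max a 0"]) auto
qed

lemma splitting_basic:
  assumes "\<mu> \<in> splittings p"
  shows "sets \<mu> = sets borel" "prob_space \<mu>" "AE q in \<mu>. q \<in> belief_simplex"
    "has_bochner_integral \<mu> (\<lambda>q. q) p" "space \<mu> = UNIV"
proof -
  show s: "sets \<mu> = sets borel" and ps: "prob_space \<mu>" and "has_bochner_integral \<mu> (\<lambda>q. q) p"
    using assms by (auto simp: splittings_def)
  show "space \<mu> = UNIV" using sets_eq_imp_space_eq[OF s] by simp
  have e: "emeasure \<mu> belief_simplex = 1" using assms by (auto simp: splittings_def)
  interpret prob_space \<mu> by (fact ps)
  show "AE q in \<mu>. q \<in> belief_simplex"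
    using AE_in_set_eq_1[of belief_simplex] e s by (simp add: emeasure_eq_measure)
qed

lemma obj_int:
  assumes "\<mu> \<in> splittings p"
  shows "integrable \<mu> F" "dp_objective M r \<delta> V \<mu> = integral\<^sup>L \<mu> F"
proof -
  note b = splitting_basic[OF assms]
  interpret prob_space \<mu> by (fact b(2))
  obtain B where B: "0 \<le> B" "\<And>q. q \<in> belief_simplex \<Longrightarrow> \<bar>V q\<bar> \<le> B" by (rule V_bound) blast
  have mc: "measurable \<mu> borel = measurable borel borel"
    by (rule measurable_cong_sets[OF b(1) refl])
  have iV: "integrable \<mu> (\<lambda>q. V (phi M q))"
  proof (rule integrable_const_bound[where B=B])
    show "AE x in \<mu>. norm (V (phi M x)) \<le> B"
      using b(3) by eventually_elim (use B phi_simplex[OF stoch] in auto)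
    show "(\<lambda>q. V (phi M q)) \<in> borel_measurable \<mu>" unfolding mc by measurable
  qed
  have iI: "integrable \<mu> (indicator (region_I r) :: _ \<Rightarrow> real)"
    by (rule integrable_const_bound[where B=1]) (auto simp: mc)
  have eqF: "F = (\<lambda>q. (1 - \<delta>) * indicator (region_I r) q + \<delta> * V (phi M q))"
    by (simp add: F_def fun_eq_iff)
  show "integrable \<mu> F" unfolding eqF using iV iI by simp
  have "integral\<^sup>L \<mu> F = (1 - \<delta>) * integral\<^sup>L \<mu> (indicator (region_I r)) + \<delta> * integral\<^sup>L \<mu> (\<lambda>q. V (phi M q))"
    unfolding eqF using iV iI by simp
  then show "dp_objective M r \<delta> V \<mu> = integral\<^sup>L \<mu> F"
    by (simp add: dp_objective_def b(5))
qed

lemma dmeas_split: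
  fixes S :: "'b set"
  assumes fin: "finite S" and nn: "\<And>z. z \<in> S \<Longrightarrow> 0 \<le> u z" and s1: "sum u S = 1"
    and pis: "\<And>z. z \<in> S \<Longrightarrow> \<pi> z \<in> belief_simplex"
  shows "dmeas S u \<pi> \<in> splittings (\<Sum>z\<in>S. u z *\<^sub>R \<pi> z)"
    "dp_objective M r \<delta> V (dmeas S u \<pi>) = (\<Sum>z\<in>S. u z * F (\<pi> z))"
proof -
  have "emeasure (dmeas S u \<pi>) belief_simplex = ennreal (\<Sum>z\<in>{z\<in>S. \<pi> z \<in> belief_simplex}. u z)"
    by (rule dmeas_emeasure[OF fin nn s1]) simp_all
  also have "{z\<in>S. \<pi> z \<in> belief_simplex} = S" using pis by auto
  finally have e: "emeasure (dmeas S u \<pi>) belief_simplex = 1" using s1 by simp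
  show sp: "dmeas S u \<pi> \<in> splittings (\<Sum>z\<in>S. u z *\<^sub>R \<pi> z)"
    unfolding splittings_def
    using dmeas_sets[OF fin nn s1] dmeas_prob[OF fin nn s1] e dmeas_mean[OF fin nn s1] by auto
  show "dp_objective M r \<delta> V (dmeas S u \<pi>) = (\<Sum>z\<in>S. u z * F (\<pi> z))"
    unfolding obj_int(2)[OF sp] by (subst dmeas_integral[OF fin nn s1]) simp_all
qed

definition "G = (\<lambda>q. (q, F q)) ` belief_simplex"

lemma G_borel: "G \<in> sets borel"
proof -
  have m2: "(fst :: ((real^'n) \<times> real) \<Rightarrow> _) \<in> borel_measurable borel"
    by (intro borel_measurable_continuous_onI continuous_intros)
  have m3: "(snd :: ((real^'n) \<times> real) \<Rightarrow> _) \<in> borel_measurable borel"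
    by (intro borel_measurable_continuous_onI continuous_intros)
  have m1: "(\<lambda>z::((real^'n) \<times> real). snd z - F (fst z)) \<in> borel_measurable borel"
    using borel_measurable_diff[OF m3 measurable_compose[OF m2 F_meas]] by (simp add: o_def)
  have "G = ((\<lambda>z::((real^'n) \<times> real). snd z - F (fst z)) -` {0} \<inter> space borel) \<inter> (fst -` belief_simplex \<inter> space borel)"
    by (auto simp: G_def image_iff)
  also have "\<dots> \<in> sets borel"
    by (intro sets.Int measurable_sets[OF m1] measurable_sets[OF m2]) auto
  finally show ?thesis .
qed

lemma bary:
  assumes "\<mu> \<in> splittings p"
  shows "(p, dp_objective M r \<delta> V \<mu>) \<in> convex hull G"
proof -
  note b = splitting_basic[OF assms]
  have mc: "measurable \<mu> borel = measurable borel borel"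
    by (rule measurable_cong_sets[OF b(1) refl])
  have mP: "(\<lambda>q. (q, F q)) \<in> measurable \<mu> borel" unfolding mc by measurable
  define \<rho> where "\<rho> = distr \<mu> borel (\<lambda>q. (q, F q))"
  have h1: "has_bochner_integral \<mu> (\<lambda>q. (q, 0::real)) (p, 0)"
    using has_bochner_integral_bounded_linear[OF bounded_linear_Pair[OF bounded_linear_ident bounded_linear_zero] b(4)] .
  have h2: "has_bochner_integral \<mu> (\<lambda>q. (0::real^'n, F q)) (0, integral\<^sup>L \<mu> F)"
    using has_bochner_integral_bounded_linear[OF bounded_linear_Pair[OF bounded_linear_zero bounded_linear_ident]
        has_bochner_integral_integrable[OF obj_int(1)[OF assms]]] .
  have h3: "has_bochner_integral \<mu> (\<lambda>q. (q, F q)) (p, dp_objective M r \<delta> V \<mu>)"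
    using has_bochner_integral_add[OF h1 h2] by (simp add: obj_int(2)[OF assms])
  have hb: "has_bochner_integral \<rho> (\<lambda>x. x) (p, dp_objective M r \<delta> V \<mu>)"
    unfolding \<rho>_def by (rule has_bochner_integral_distr[OF _ mP]) (use h3 in simp_all)
  have e: "emeasure \<rho> G = 1"
  proof -
    have "emeasure \<rho> G = emeasure \<mu> ((\<lambda>q. (q, F q)) -` G \<inter> space \<mu>)"
      unfolding \<rho>_def by (rule emeasure_distr[OF mP G_borel])
    also have "(\<lambda>q. (q, F q)) -` G \<inter> space \<mu> = belief_simplex" by (auto simp: G_def b(5))
    finally show ?thesis using assms by (simp add: splittings_def)
  qed
  show ?thesis
  proof (rule barycenter_in_convex[OF _ _ G_borel e hb])
    show "sets \<rho> = sets borel" by (simp add: \<rho>_def)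
    show "prob_space \<rho>" unfolding \<rho>_def by (rule prob_space.prob_space_distr[OF b(2) mP])
  qed (auto simp: hull_subset convex_convex_hull)
qed

lemma hull_le:
  assumes "(y, s) \<in> convex hull G"
  shows "y \<in> belief_simplex" "s \<le> V y"
proof -
  obtain T u where T: "finite T" "T \<subseteq> G" "\<And>x. x \<in> T \<Longrightarrow> 0 \<le> u x" "sum u T = 1"
    "(\<Sum>v\<in>T. u v *\<^sub>R v) = (y, s)"
    using assms unfolding convex_hull_explicit by blast
  have fstT: "\<And>v. v \<in> T \<Longrightarrow> fst v \<in> belief_simplex" and sndT: "\<And>v. v \<in> T \<Longrightarrow> snd v = F (fst v)"
    using T(2) by (auto simp: G_def)
  have y: "y = (\<Sum>v\<in>T. u v *\<^sub>R fst v)"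
    using arg_cong[OF T(5), of fst] by (simp add: fst_sum)
  have s: "s = (\<Sum>v\<in>T. u v * F (fst v))"
    using arg_cong[OF T(5), of snd] by (simp add: snd_sum sndT)
  show ys: "y \<in> belief_simplex"
    unfolding y by (rule convex_sum[OF T(1) simplex_convex T(4) T(3) fstT])
  have sp1: "dmeas T u fst \<in> splittings (\<Sum>v\<in>T. u v *\<^sub>R fst v)"
    by (rule dmeas_split(1)) (use T(1,3,4) fstT in auto)
  have sp2: "dp_objective M r \<delta> V (dmeas T u fst) = (\<Sum>v\<in>T. u v * F (fst v))"
    by (rule dmeas_split(2)) (use T(1,3,4) fstT in auto)
  have "dp_objective M r \<delta> V (dmeas T u fst) \<le> V y"
    using dp ys sp1 unfolding y solves_dp_def by blast
  then show "s \<le> V y" using sp2 s by simp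
qed

lemma V_in_hull:
  assumes "y \<in> belief_simplex"
  shows "(y, V y) \<in> convex hull G"
proof -
  obtain \<mu> where "\<mu> \<in> splittings y" "dp_objective M r \<delta> V \<mu> = V y"
    using dp assms unfolding solves_dp_def by blast
  then show ?thesis using bary by metis
qed

lemma concave:
  assumes "finite A" "\<And>i. i \<in> A \<Longrightarrow> 0 \<le> w i" "sum w A = 1" "\<And>i. i \<in> A \<Longrightarrow> y i \<in> belief_simplex"
  shows "(\<Sum>i\<in>A. w i * V (y i)) \<le> V (\<Sum>i\<in>A. w i *\<^sub>R y i)"
proof -
  have "(\<Sum>i\<in>A. w i *\<^sub>R (y i, V (y i))) \<in> convex hull G"
    by (rule convex_sum[OF assms(1) convex_convex_hull assms(3) assms(2)]) (use V_in_hull assms(4) in auto)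
  moreover have "(\<Sum>i\<in>A. w i *\<^sub>R (y i, V (y i))) = ((\<Sum>i\<in>A. w i *\<^sub>R y i), (\<Sum>i\<in>A. w i * V (y i)))"
    by (simp add: prod_eq_iff fst_sum snd_sum)
  ultimately show ?thesis using hull_le(2) by metis
qed

lemma two_point:
  assumes "q1 \<in> belief_simplex" "q2 \<in> belief_simplex" "0 \<le> t" "t \<le> 1"
  shows "\<exists>\<nu>\<in>splittings (t *\<^sub>R q1 + (1 - t) *\<^sub>R q2). emeasure \<nu> {q1, q2} = 1 \<and>
           dp_objective M r \<delta> V \<nu> = t * F q1 + (1 - t) * F q2"
proof -
  define u where "u = (\<lambda>b::bool. if b then t else 1 - t)"
  define \<pi> where "\<pi> = (\<lambda>b::bool. if b then q1 else q2)"
  have fin: "finite (UNIV::bool set)" by simp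
  have nn: "\<And>z. z \<in> UNIV \<Longrightarrow> 0 \<le> u z" using assms by (auto simp: u_def)
  have s1: "sum u UNIV = 1" by (simp add: UNIV_bool u_def)
  have pis: "\<And>z. z \<in> UNIV \<Longrightarrow> \<pi> z \<in> belief_simplex" using assms by (auto simp: \<pi>_def)
  have sp1: "dmeas UNIV u \<pi> \<in> splittings (\<Sum>z\<in>UNIV. u z *\<^sub>R \<pi> z)"
    by (rule dmeas_split(1)) (simp_all add: nn s1 pis)
  have sp2: "dp_objective M r \<delta> V (dmeas UNIV u \<pi>) = (\<Sum>z\<in>UNIV. u z * F (\<pi> z))"
    by (rule dmeas_split(2)) (simp_all add: nn s1 pis)
  have m: "(\<Sum>z\<in>UNIV. u z *\<^sub>R \<pi> z) = t *\<^sub>R q1 + (1 - t) *\<^sub>R q2" by (simp add: UNIV_bool u_def \<pi>_def)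
  have o: "(\<Sum>z\<in>UNIV. u z * F (\<pi> z)) = t * F q1 + (1 - t) * F q2" by (simp add: UNIV_bool u_def \<pi>_def)
  have cl: "{q1, q2} \<in> sets borel" by (rule borel_closed) (rule finite_imp_closed, simp)
  have "emeasure (dmeas UNIV u \<pi>) {q1, q2} = ennreal (\<Sum>z\<in>{z\<in>UNIV. \<pi> z \<in> {q1, q2}}. u z)"
    by (rule dmeas_emeasure) (simp_all add: nn s1 cl)
  also have "{z\<in>UNIV. \<pi> z \<in> {q1, q2}} = UNIV" by (auto simp: \<pi>_def)
  finally have e: "emeasure (dmeas UNIV u \<pi>) {q1, q2} = 1" using s1 by simp
  have sp1': "dmeas UNIV u \<pi> \<in> splittings (t *\<^sub>R q1 + (1 - t) *\<^sub>R q2)" using sp1 unfolding m .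
  show ?thesis
    by (rule bexI[OF _ sp1']) (rule conjI[OF e], simp only: sp2 o)
qed


lemma main:
  assumes p: "p \<in> belief_simplex - region_I r"
  shows "\<exists>\<mu>\<in>splittings p. (\<exists>a b. emeasure \<mu> {a, b} = 1) \<and> dp_objective M r \<delta> V \<mu> = V p"
proof -
  have ps: "p \<in> belief_simplex" and pI: "p \<notin> region_I r" using p by auto
  obtain T u where T: "finite T" "T \<subseteq> G" "\<And>x. x \<in> T \<Longrightarrow> 0 \<le> u x" "sum u T = 1"
    and T5: "(\<Sum>v\<in>T. u v *\<^sub>R v) = (p, V p)"
    using V_in_hull[OF ps] unfolding convex_hull_explicit by blast
  have fstT: "\<And>v. v \<in> T \<Longrightarrow> fst v \<in> belief_simplex" and sndT: "\<And>v. v \<in> T \<Longrightarrow> snd v = F (fst v)"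
    using T(2) by (auto simp: G_def)
  have pe: "p = (\<Sum>v\<in>T. u v *\<^sub>R fst v)"
    using arg_cong[OF T5, of fst] by (simp add: fst_sum)
  have Ve: "V p = (\<Sum>v\<in>T. u v * F (fst v))"
    using arg_cong[OF T5, of snd] by (simp add: snd_sum sndT)
  define TI where "TI = {v\<in>T. fst v \<in> region_I r}"
  define TN where "TN = T - TI"
  define t where "t = sum u TI"
  have finI: "finite TI" and finN: "finite TN" using T(1) by (auto simp: TI_def TN_def)
  have disj: "TI \<inter> TN = {}" and un: "T = TI \<union> TN" and sub: "TI \<subseteq> T" "TN \<subseteq> T"
    by (auto simp: TI_def TN_def)
  have sumsplit: "sum g T = sum g TI + sum g TN" for g :: "_ \<Rightarrow> 'z::comm_monoid_add"
    unfolding un by (rule sum.union_disjoint[OF finI finN disj])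
  have nnI: "\<And>v. v \<in> TI \<Longrightarrow> 0 \<le> u v" and nnN: "\<And>v. v \<in> TN \<Longrightarrow> 0 \<le> u v"
    using T(3) sub by auto
  have t0: "0 \<le> t" unfolding t_def using nnI by (simp add: sum_nonneg)
  have tN: "sum u TN = 1 - t" using sumsplit[of u] T(4) by (simp add: t_def)
  have tle: "t \<le> 1" using tN sum_nonneg[of TN u] nnN by simp
  have indsum: "(\<Sum>v\<in>T. u v * indicator (region_I r) (fst v)) = t"
  proof -
    have "(\<Sum>v\<in>T. u v * indicator (region_I r) (fst v)) = (\<Sum>v\<in>T. if fst v \<in> region_I r then u v else 0)"
      by (intro sum.cong) (auto simp: indicator_def)
    also have "\<dots> = t" unfolding t_def TI_def by (rule sum.inter_filter[OF T(1), symmetric])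
    finally show ?thesis .
  qed
  have Ve2: "V p = (1 - \<delta>) * t + \<delta> * (\<Sum>v\<in>T. u v * V (phi M (fst v)))"
  proof -
    have "V p = (\<Sum>v\<in>T. (1 - \<delta>) * (u v * indicator (region_I r) (fst v)) + \<delta> * (u v * V (phi M (fst v))))"
      unfolding Ve F_def by (intro sum.cong) (auto simp: algebra_simps)
    also have "\<dots> = (1 - \<delta>) * t + \<delta> * (\<Sum>v\<in>T. u v * V (phi M (fst v)))"
      by (simp add: sum.distrib sum_distrib_left[symmetric] indsum)
    finally show ?thesis .
  qed
  have phis: "\<And>v. v \<in> T \<Longrightarrow> phi M (fst v) \<in> belief_simplex"
    using fstT phi_simplex[OF stoch] by blast
  have t1: "t \<noteq> 1"
  proof
    assume t1: "t = 1"
    then have "sum u TN = 0" using tN by simp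
    then have z: "\<forall>v\<in>TN. u v = 0" using sum_nonneg_eq_0_iff[of TN u] finN nnN by blast
    have "p = (\<Sum>v\<in>TI. u v *\<^sub>R fst v) + (\<Sum>v\<in>TN. u v *\<^sub>R fst v)" using pe sumsplit by metis
    also have "(\<Sum>v\<in>TN. u v *\<^sub>R fst v) = 0" using z by simp
    finally have "p = (\<Sum>v\<in>TI. u v *\<^sub>R fst v)" by simp
    moreover have "(\<Sum>v\<in>TI. u v *\<^sub>R fst v) \<in> region_I r"
      by (rule convex_sum[OF finI regionI_convex]) (use t1 t_def nnI TI_def in auto)
    ultimately show False using pI by simp
  qed
  show ?thesis
  proof (cases "t = 0")
    case True
    have "(\<Sum>v\<in>T. u v * V (phi M (fst v))) \<le> V (\<Sum>v\<in>T. u v *\<^sub>R phi M (fst v))"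
      by (rule concave) (use T(1,3,4) phis in auto)
    also have "(\<Sum>v\<in>T. u v *\<^sub>R phi M (fst v)) = phi M p" unfolding pe phi_sum ..
    finally have le: "V p \<le> \<delta> * V (phi M p)" using Ve2 True d0 by (simp add: mult_left_mono)
    obtain \<nu> where nu: "\<nu> \<in> splittings (0 *\<^sub>R p + (1 - 0) *\<^sub>R p)" "emeasure \<nu> {p, p} = 1"
      "dp_objective M r \<delta> V \<nu> = 0 * F p + (1 - 0) * F p"
      using two_point[OF ps ps] by fastforce
    have nup: "\<nu> \<in> splittings p" using nu(1) by simp
    have "F p = \<delta> * V (phi M p)" using pI by (simp add: F_def)
    then have "V p \<le> dp_objective M r \<delta> V \<nu>" using nu(3) le by simp
    moreover have "dp_objective M r \<delta> V \<nu> \<le> V p" using dp ps nup unfolding solves_dp_def by blast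
    ultimately have eq: "dp_objective M r \<delta> V \<nu> = V p" by simp
    have "\<exists>a b. emeasure \<nu> {a, b} = 1" using nu(2) by blast
    then show ?thesis using nup eq by blast
  next
    case False
    then have tpos: "0 < t" and tlt: "t < 1" using t0 tle t1 by auto
    define q1 where "q1 = (\<Sum>v\<in>TI. (u v / t) *\<^sub>R fst v)"
    define q2 where "q2 = (\<Sum>v\<in>TN. (u v / (1 - t)) *\<^sub>R fst v)"
    have s1: "(\<Sum>v\<in>TI. u v / t) = 1" using tpos by (simp add: sum_divide_distrib[symmetric] t_def)
    have s2: "(\<Sum>v\<in>TN. u v / (1 - t)) = 1" using tlt by (simp add: sum_divide_distrib[symmetric] tN)
    have nn1: "\<And>v. v \<in> TI \<Longrightarrow> 0 \<le> u v / t" using nnI tpos by simp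
    have nn2: "\<And>v. v \<in> TN \<Longrightarrow> 0 \<le> u v / (1 - t)" using nnN tlt by simp
    have q1I: "q1 \<in> region_I r"
      unfolding q1_def by (rule convex_sum) (use finI regionI_convex s1 nn1 in \<open>auto simp: TI_def\<close>)
    then have q1s: "q1 \<in> belief_simplex" using regionI_sub by blast
    have q2s: "q2 \<in> belief_simplex"
      unfolding q2_def by (rule convex_sum) (use finN simplex_convex s2 nn2 fstT sub in auto)
    have pq: "t *\<^sub>R q1 + (1 - t) *\<^sub>R q2 = p"
    proof -
      have "t *\<^sub>R q1 = (\<Sum>v\<in>TI. u v *\<^sub>R fst v)"
        using tpos by (simp add: q1_def scaleR_sum_right)
      moreover have "(1 - t) *\<^sub>R q2 = (\<Sum>v\<in>TN. u v *\<^sub>R fst v)"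
        using tlt by (simp add: q2_def scaleR_sum_right)
      ultimately show ?thesis using pe sumsplit by metis
    qed
    have c1: "(\<Sum>v\<in>TI. (u v / t) * V (phi M (fst v))) \<le> V (phi M q1)"
      unfolding q1_def phi_sum by (rule concave) (use finI nn1 s1 phis sub in auto)
    have c2: "(\<Sum>v\<in>TN. (u v / (1 - t)) * V (phi M (fst v))) \<le> V (phi M q2)"
      unfolding q2_def phi_sum by (rule concave) (use finN nn2 s2 phis sub in auto)
    have c1': "(\<Sum>v\<in>TI. u v * V (phi M (fst v))) \<le> t * V (phi M q1)"
    proof -
      have "(\<Sum>v\<in>TI. u v * V (phi M (fst v))) = t * (\<Sum>v\<in>TI. (u v / t) * V (phi M (fst v)))"
        using tpos by (simp add: sum_distrib_left)
      then show ?thesis using c1 tpos by (simp add: mult_left_mono)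
    qed
    have c2': "(\<Sum>v\<in>TN. u v * V (phi M (fst v))) \<le> (1 - t) * V (phi M q2)"
    proof -
      have "(\<Sum>v\<in>TN. u v * V (phi M (fst v))) = (1 - t) * (\<Sum>v\<in>TN. (u v / (1 - t)) * V (phi M (fst v)))"
        using tlt by (simp add: sum_distrib_left)
      then show ?thesis using c2 tlt by (simp add: mult_left_mono)
    qed
    have F1: "F q1 = (1 - \<delta>) + \<delta> * V (phi M q1)" using q1I by (simp add: F_def)
    have F2: "\<delta> * V (phi M q2) \<le> F q2" using d1 by (simp add: F_def)
    have "V p \<le> (1 - \<delta>) * t + \<delta> * (t * V (phi M q1) + (1 - t) * V (phi M q2))"
      unfolding Ve2 sumsplit using c1' c2' d0 by (intro add_left_mono mult_left_mono) auto
    also have "\<dots> = t * ((1 - \<delta>) + \<delta> * V (phi M q1)) + (1 - t) * (\<delta> * V (phi M q2))"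
      by (simp add: algebra_simps)
    also have "\<dots> \<le> t * F q1 + (1 - t) * F q2"
      unfolding F1 using F2 tlt by (intro add_left_mono mult_left_mono) auto
    finally have le: "V p \<le> t * F q1 + (1 - t) * F q2" .
    obtain \<nu> where nu: "\<nu> \<in> splittings (t *\<^sub>R q1 + (1 - t) *\<^sub>R q2)" "emeasure \<nu> {q1, q2} = 1"
      "dp_objective M r \<delta> V \<nu> = t * F q1 + (1 - t) * F q2"
      using two_point[OF q1s q2s t0 tle] by blast
    have nup: "\<nu> \<in> splittings p" using nu(1) pq by simp
    have "dp_objective M r \<delta> V \<nu> \<le> V p" using dp ps nup unfolding solves_dp_def by blast
    then show ?thesis using nup nu(2) nu(3) le by (intro bexI[of _ \<nu>]) auto
  qed
qed

end

theorem corollary2: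
  fixes M :: "real^'n::finite^'n" and r :: "'n \<Rightarrow> real" and \<delta> :: real
    and V :: "real^'n \<Rightarrow> real" and p :: "real^'n"
  assumes "stochastic_matrix M" and "irreducible_chain M"
    and "0 \<le> \<delta>" and "\<delta> < 1"
    and "solves_dp M r \<delta> V"
    and "p \<in> belief_simplex - region_I r"
  shows "\<exists>\<mu>\<in>splittings p. (\<exists>a b. emeasure \<mu> {a, b} = 1)
           \<and> dp_objective M r \<delta> V \<mu> = V p"
  using main[OF assms(1,3,4,5,6)] .

end
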